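(* Suppose that $\rho\ge2$, that $\rho=t-\Theta(1)$, and that $a=t+O(1)$ is a positive integer. Then $x_t(\rho)+a\,y_t(\rho)=\log(d_a)+O(1)$. (That is, for fixed constants bounding $t-\rho$ above and below by positive constants and bounding $|a-t|$, the difference $x_t(\rho)+ay_t(\rho)-\log d_a$ is bounded uniformly.)
   Context: $d_i=2^{\binom i2}i!$. For positive integer $t$ and real $1<\rho<t$, $x_t(\rho),y_t(\rho)$ are the unique reals $x,y$ with $\sum_{i=1}^t e^{x+iy}d_i^{-1}=1$ and $\sum_{i=1}^t ie^{x+iy}d_i^{-1}=\rho$. Logarithms are natural. *)

theory Defs
  imports Complex_Main
begin

definition d :: "nat \<Rightarrow> real" where
  "d i = 2 ^ (i choose 2) * fact i"

definition xy_eqs :: "nat \<Rightarrow> real \<Rightarrow> real \<Rightarrow> real \<Rightarrow> bool" where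
  "xy_eqs t \<rho> x y \<longleftrightarrow>
     (\<Sum>i=1..t. exp (x + real i * y) / d i) = 1 \<and>
     (\<Sum>i=1..t. real i * exp (x + real i * y) / d i) = \<rho>"

definition xt :: "nat \<Rightarrow> real \<Rightarrow> real" where
  "xt t \<rho> = fst (THE p. xy_eqs t \<rho> (fst p) (snd p))"

definition yt :: "nat \<Rightarrow> real \<Rightarrow> real" where
  "yt t \<rho> = snd (THE p. xy_eqs t \<rho> (fst p) (snd p))"

end

theory Submission
  imports Defs
begin

lemma d_pos: "d i > 0" unfolding d_def by simp

lemma d_Suc: "d (Suc i) = d i * 2^i * real (Suc i)"
proof -
  have "Suc i choose 2 = (i choose 2) + i"
    by (simp add: numeral_2_eq_2)
  then show ?thesis unfolding d_def by (simp add: power_add algebra_simps)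
qed

definition Zs :: "nat \<Rightarrow> real \<Rightarrow> real" where
  "Zs t l = (\<Sum>i=1..t. l^i / d i)"
definition Ms :: "nat \<Rightarrow> real \<Rightarrow> real" where
  "Ms t l = (\<Sum>i=1..t. real i * l^i / d i)"

lemma Zs_pos: "0 < l \<Longrightarrow> 1 \<le> t \<Longrightarrow> 0 < Zs t l"
  unfolding Zs_def by (intro sum_pos) (auto intro: divide_pos_pos d_pos)

lemma xy_iff: "xy_eqs t \<rho> x y \<longleftrightarrow> exp x * Zs t (exp y) = 1 \<and> exp x * Ms t (exp y) = \<rho>"
proof -
  have e: "exp (x + real i * y) = exp x * exp y ^ i" for i
    by (simp add: exp_add exp_of_nat_mult)
  show ?thesis unfolding xy_eqs_def Zs_def Ms_def e
    by (simp add: sum_distrib_left mult_ac)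
qed

lemma pow_cross: fixes l l' :: real
  assumes "0 < l" "l < l'" "j < i"
  shows "l'^j * l^i < l'^i * l^j"
proof -
  obtain k where i: "i = j + k" and k: "0 < k" using assms(3) by (metis less_imp_add_positive)
  have "l^k < l'^k" using assms k by (intro power_strict_mono) auto
  moreover have "0 < l'^j * l^j" using assms by auto
  ultimately have "l'^j * l^j * l^k < l'^j * l^j * l'^k" by (rule mult_strict_left_mono)
  then show ?thesis unfolding i by (simp add: power_add mult_ac)
qed

lemma pair_nonneg: fixes l l' :: real
  assumes "0 < l" "l < l'"
  shows "0 \<le> (real i - real j) * (l'^i * l^j - l'^j * l^i)"
    and "i \<noteq> j \<Longrightarrow> 0 < (real i - real j) * (l'^i * l^j - l'^j * l^i)"
proof -
  have "i \<noteq> j \<Longrightarrow> 0 < (real i - real j) * (l'^i * l^j - l'^j * l^i)"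
  proof (cases "j < i")
    case True
    then show ?thesis using pow_cross[OF assms True] by (intro mult_pos_pos) auto
  next
    case False
    assume "i \<noteq> j"
    then have "i < j" using False by auto
    then show ?thesis using pow_cross[OF assms \<open>i < j\<close>] by (intro mult_neg_neg) auto
  qed
  then show "0 \<le> (real i - real j) * (l'^i * l^j - l'^j * l^i)" by (cases "i = j") force+
  show "i \<noteq> j \<Longrightarrow> 0 < (real i - real j) * (l'^i * l^j - l'^j * l^i)" by fact
qed

lemma mono_mu:
  assumes t: "2 \<le> t" and l: "0 < l" "l < l'"
  shows "Ms t l * Zs t l' < Ms t l' * Zs t l"
proof -
  define I where "I = {1..t}"
  define a where "a i = l'^i / d i" for i
  define b where "b i = l^i / d i" for i
  define h where "h i j = (real i - real j) * (a i * b j - a j * b i)" for i j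
  have M1: "Ms t l' * Zs t l = (\<Sum>i\<in>I. \<Sum>j\<in>I. real i * a i * b j)"
    unfolding Ms_def Zs_def I_def a_def b_def sum_product by (simp add: mult_ac)
  have M2: "Ms t l * Zs t l' = (\<Sum>i\<in>I. \<Sum>j\<in>I. real j * a i * b j)"
    unfolding Ms_def Zs_def I_def a_def b_def sum_product
    by (subst sum.swap) (simp add: mult_ac)
  have S1: "(\<Sum>i\<in>I. \<Sum>j\<in>I. (real i - real j) * a j * b i) = (\<Sum>i\<in>I. \<Sum>j\<in>I. (real j - real i) * a i * b j)"
    by (subst sum.swap) simp
  have "(\<Sum>i\<in>I. \<Sum>j\<in>I. h i j) = (\<Sum>i\<in>I. \<Sum>j\<in>I. (real i - real j) * a i * b j) - (\<Sum>i\<in>I. \<Sum>j\<in>I. (real i - real j) * a j * b i)"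
    unfolding h_def by (simp add: sum_subtractf[symmetric] algebra_simps)
  also have "\<dots> = 2 * (Ms t l' * Zs t l - Ms t l * Zs t l')"
    unfolding S1 M1 M2 by (simp add: sum_subtractf[symmetric] sum_distrib_left algebra_simps)
  finally have eq: "(\<Sum>i\<in>I. \<Sum>j\<in>I. h i j) = 2 * (Ms t l' * Zs t l - Ms t l * Zs t l')" .
  have hd: "h i j = (real i - real j) * (l'^i * l^j - l'^j * l^i) / (d i * d j)" for i j
    unfolding h_def a_def b_def using d_pos[of i] d_pos[of j]
    by (simp add: divide_simps)
  have hn: "0 \<le> h i j" for i j unfolding hd using pair_nonneg(1)[OF l, of i j] d_pos
    by (simp add: divide_nonneg_pos)
  have hp: "0 < h 2 1" unfolding hd using pair_nonneg(2)[OF l, of 2 1] d_pos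
    by (simp add: divide_pos_pos)
  have "0 < (\<Sum>j\<in>I. h 2 j)"
    using t hp hn by (intro sum_pos2[where i=1]) (auto simp: I_def)
  then have "0 < (\<Sum>i\<in>I. \<Sum>j\<in>I. h i j)"
    using t hn sum_pos2[of I 2 "\<lambda>i. \<Sum>j\<in>I. h i j"] by (auto simp: I_def intro: sum_nonneg)
  then show ?thesis unfolding eq by simp
qed

lemma exp_partial: fixes A :: real assumes "0 \<le> A"
  shows "(\<Sum>k<n. A^k / fact k) \<le> exp A"
proof -
  have s: "(\<lambda>k. A^k / fact k) sums exp A" using exp_converges[of A]
    by (simp add: divide_inverse mult_ac)
  show ?thesis
    using sum_le_suminf[OF sums_summable[OF s], of "{..<n}"] sums_unique[OF s] assms by auto
qed

lemma sum_rev: "(\<Sum>i=1..t. g i) = (\<Sum>k<t. g (t - k))" for g :: "nat \<Rightarrow> real"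
  by (rule sum.reindex_bij_witness[where i="\<lambda>k. t - k" and j="\<lambda>i. t - i"]) auto

lemma kA_eq: "(\<Sum>k<Suc n. real k * A^k / fact k) = A * (\<Sum>k<n. A^k / fact k)" for A :: real
proof (induction n)
  case 0 then show ?case by simp
next
  case (Suc n)
  have f: "(fact (Suc n)::real) = real (Suc n) * fact n" by simp
  have "real (Suc n) * A ^ Suc n / fact (Suc n) = A * (A^n / fact n)"
    unfolding f by (simp add: field_simps del: of_nat_Suc)
  then show ?case using Suc by (simp add: algebra_simps)
qed

lemma kA: fixes A :: real assumes "0 \<le> A"
  shows "(\<Sum>k<n. real k * A^k / fact k) \<le> A * exp A"
proof (cases n)
  case 0 then show ?thesis using assms by simp
next
  case (Suc m)
  then show ?thesis unfolding Suc kA_eq using exp_partial[OF assms, of m] assms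
    by (simp add: mult_left_mono)
qed

lemma tail:
  fixes w :: "nat \<Rightarrow> real"
  assumes A: "0 \<le> A" and pos: "\<And>i. 0 < w i"
    and rat: "\<And>i. 1 \<le> i \<Longrightarrow> i < t \<Longrightarrow> w i \<le> w (Suc i) * A / real (t - i)"
  shows "k < t \<Longrightarrow> w (t - k) \<le> w t * A^k / fact k"
proof (induction k)
  case 0 then show ?case by simp
next
  case (Suc k)
  define i where "i = t - Suc k"
  have i1: "1 \<le> i" "i < t" using Suc.prems by (auto simp: i_def)
  have si: "Suc i = t - k" "t - i = Suc k" using Suc.prems by (auto simp: i_def)
  have "w (t - Suc k) = w i" by (simp add: i_def)
  also have "\<dots> \<le> w (t - k) * A / real (Suc k)" using rat[OF i1] si by simp
  also have "\<dots> \<le> (w t * A^k / fact k) * A / real (Suc k)"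
    using Suc.IH Suc.prems A by (intro divide_right_mono mult_right_mono) auto
  also have "\<dots> = w t * A ^ Suc k / fact (Suc k)" by (simp add: field_simps)
  finally show ?case .
qed

lemma tail_sums:
  fixes w :: "nat \<Rightarrow> real"
  assumes A: "0 \<le> A" and pos: "\<And>i. 0 < w i"
    and rat: "\<And>i. 1 \<le> i \<Longrightarrow> i < t \<Longrightarrow> w i \<le> w (Suc i) * A / real (t - i)"
  shows "(\<Sum>i=1..t. w i) \<le> w t * exp A"
    and "(\<Sum>i=1..t. real (t - i) * w i) \<le> w t * (A * exp A)"
proof -
  have tk: "k < t \<Longrightarrow> w (t - k) \<le> w t * A^k / fact k" for k using tail[OF A pos rat] by blast
  have "(\<Sum>i=1..t. w i) = (\<Sum>k<t. w (t - k))" by (rule sum_rev)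
  also have "\<dots> \<le> (\<Sum>k<t. w t * (A^k / fact k))" using tk by (intro sum_mono) auto
  also have "\<dots> = w t * (\<Sum>k<t. A^k / fact k)" by (simp add: sum_distrib_left)
  also have "\<dots> \<le> w t * exp A" using exp_partial[OF A] pos[of t] by (intro mult_left_mono) auto
  finally show "(\<Sum>i=1..t. w i) \<le> w t * exp A" .
  have "(\<Sum>i=1..t. real (t - i) * w i) = (\<Sum>k<t. real (t - (t - k)) * w (t - k))" by (rule sum_rev)
  also have "\<dots> = (\<Sum>k<t. real k * w (t - k))" by (intro sum.cong) auto
  also have "\<dots> \<le> (\<Sum>k<t. w t * (real k * A^k / fact k))"
  proof (intro sum_mono)
    fix k assume "k \<in> {..<t}"
    then have "real k * w (t - k) \<le> real k * (w t * A^k / fact k)"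
      using tk by (intro mult_left_mono) auto
    then show "real k * w (t - k) \<le> w t * (real k * A^k / fact k)" by (simp add: mult_ac)
  qed
  also have "\<dots> = w t * (\<Sum>k<t. real k * A^k / fact k)" by (simp add: sum_distrib_left)
  also have "\<dots> \<le> w t * (A * exp A)" using kA[OF A] pos[of t] by (intro mult_left_mono) auto
  finally show "(\<Sum>i=1..t. real (t - i) * w i) \<le> w t * (A * exp A)" .
qed

lemma nat_ineq1: "i < t \<Longrightarrow> 2^i * Suc i * (t - i) \<le> 2^(t-1) * (t::nat)"
proof -
  assume "i < t"
  then obtain k where t: "t = i + k + 1" by (metis add.commute less_imp_add_positive Suc_eq_plus1 less_iff_Suc_add add_Suc_right)
  have "Suc k \<le> 2^k" by (rule Suc_leI) (rule less_exp)
  then have "2^i * Suc i * Suc k \<le> 2^i * Suc i * 2^k" by (rule mult_le_mono2)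
  also have "\<dots> = (2^i * 2^k) * Suc i" by (simp add: algebra_simps)
  also have "\<dots> \<le> (2^i * 2^k) * (i + k + 1)" by (rule mult_le_mono2) simp
  finally show ?thesis unfolding t by (simp add: power_add mult_ac)
qed

lemma nat_ineq2: "i < t \<Longrightarrow> t \<le> i + 1 + N \<Longrightarrow> 2^(t-1) * (t::nat) \<le> 4^N * (2^i * Suc i)"
proof -
  assume "i < t" "t \<le> i + 1 + N"
  then obtain k where t: "t = i + k + 1" and kN: "k \<le> N"
    by (metis add.commute less_imp_add_positive Suc_eq_plus1 less_iff_Suc_add add_Suc_right add_le_cancel_left)
  have "Suc k \<le> 2^k" by (rule Suc_leI) (rule less_exp)
  have "i + k + 1 \<le> Suc i * Suc k" by simp
  also have "\<dots> \<le> Suc i * 2^k" using \<open>Suc k \<le> 2^k\<close> by (rule mult_le_mono2)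
  finally have "2^(i+k) * (i + k + 1) \<le> 2^(i+k) * (Suc i * 2^k)" by (rule mult_le_mono2)
  also have "\<dots> = 2^i * Suc i * (2^k * 2^k)" by (simp add: power_add algebra_simps)
  also have "2^k * 2^k = (4::nat)^k" by (simp add: power_mult_distrib[symmetric])
  also have "(4::nat)^k \<le> 4^N" using kN by (simp add: power_increasing)
  finally show ?thesis unfolding t by (simp add: mult_ac)
qed

lemma ratio_eq: assumes "0 < l"
  shows "l^(Suc i) / d (Suc i) = (l^i / d i) * (l / (2^i * real (Suc i)))"
  using d_pos[of i] assms by (simp add: d_Suc field_simps del: of_nat_Suc)

lemma ratio_up:
  fixes l A :: real
  assumes A: "0 < A" and l: "0 < l" and lb: "2^(t-1) * real t / A \<le> l" and i: "i < t"
  shows "l^i / d i \<le> l^(Suc i) / d (Suc i) * A / real (t - i)"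
proof -
  define u where "u = l^i / d i"
  have u: "0 < u" using d_pos[of i] l by (simp add: u_def)
  have ti: "0 < real (t - i)" using i by simp
  have "real (2^i * Suc i * (t - i)) \<le> real (2^(t-1) * t)"
    using nat_ineq1[OF i] by (simp only: of_nat_le_iff)
  then have "2^i * real (Suc i) * real (t - i) \<le> 2^(t-1) * real t" by (simp only: of_nat_mult of_nat_power of_nat_numeral)
  also have "\<dots> \<le> A * l" using lb A by (simp add: divide_le_eq mult.commute)
  finally have key: "2^i * real (Suc i) * real (t - i) \<le> A * l" .
  have X: "0 < 2^i * real (Suc i)" by (simp del: of_nat_Suc)
  have "u = u * ((l / (2^i * real (Suc i))) * ((2^i * real (Suc i)) / l))"
    using l X by simp
  also have "\<dots> = u * (l / (2^i * real (Suc i))) * ((2^i * real (Suc i)) / l)" by (simp only: mult.assoc)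
  also have "\<dots> \<le> u * (l / (2^i * real (Suc i))) * (A / real (t - i))"
  proof (rule mult_left_mono)
    show "2 ^ i * real (Suc i) / l \<le> A / real (t - i)"
      using key l ti by (simp add: divide_simps mult_ac del: of_nat_Suc)
    show "0 \<le> u * (l / (2 ^ i * real (Suc i)))" using u l by (simp del: of_nat_Suc)
  qed
  finally show ?thesis unfolding u_def ratio_eq[OF l] by (simp add: mult_ac)
qed

lemma ratio_down:
  fixes l :: real
  assumes l: "0 < l" and ub: "l \<le> 2^(t-1) * real t / 4^(Suc N)" and i: "i < t" "t \<le> i + 1 + N"
  shows "l^(Suc i) / d (Suc i) \<le> (l^i / d i) / 4"
proof -
  have "real (2^(t-1) * t) \<le> real (4^N * (2^i * Suc i))"
    using nat_ineq2[OF i] by (simp only: of_nat_le_iff)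
  then have n: "2^(t-1) * real t \<le> 4^N * (2^i * real (Suc i))" by (simp only: of_nat_mult of_nat_power of_nat_numeral)
  have "4 * l \<le> 4 * (2^(t-1) * real t / 4^(Suc N))" using ub by simp
  also have "\<dots> = 2^(t-1) * real t / 4^N" by simp
  also have "\<dots> \<le> 2^i * real (Suc i)" using n by (simp add: divide_le_eq mult_ac)
  finally have "l / (2^i * real (Suc i)) \<le> 1/4" by (simp add: divide_simps mult_ac del: of_nat_Suc)
  then have "(l^i / d i) * (l / (2^i * real (Suc i))) \<le> (l^i / d i) * (1/4)"
    using d_pos[of i] l by (intro mult_left_mono) auto
  then show ?thesis unfolding ratio_eq[OF l] by simp
qed

lemma neg_sum:
  fixes w :: "nat \<Rightarrow> real"
  assumes m: "1 \<le> m" "m \<le> t" and pos: "\<And>i. 0 < w i"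
    and dec: "\<And>i. m \<le> i \<Longrightarrow> i < t \<Longrightarrow> w (Suc i) \<le> w i / 4"
  shows "(\<Sum>i=1..t. (real i - real m - 1) * w i) < 0"
proof -
  have claim: "m + j \<le> t \<Longrightarrow> (\<Sum>i=1..m+j. (real i - real m - 1) * w i) \<le> - w m / 2^j \<and> w (m+j) \<le> w m / 4^j" for j
  proof (induction j)
    case 0
    obtain m' where m': "m = Suc m'" using m by (cases m) auto
    have "(\<Sum>i=1..m'. (real i - real m - 1) * w i) \<le> 0"
    proof (intro sum_nonpos)
      fix x assume "x \<in> {1..m'}"
      then show "(real x - real m - 1) * w x \<le> 0" using pos[of x] m'
        by (intro mult_nonpos_nonneg) auto
    qed
    then show ?case using m' by simp
  next
    case (Suc j)
    have IH: "(\<Sum>i=1..m+j. (real i - real m - 1) * w i) \<le> - w m / 2^j" "w (m+j) \<le> w m / 4^j"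
      using Suc by auto
    have d1: "w (Suc (m+j)) \<le> w (m+j) / 4" using dec[of "m+j"] Suc.prems by auto
    have "w (Suc (m+j)) * 4^(Suc j) = (4 * w (Suc (m+j))) * 4^j" by simp
    also have "\<dots> \<le> w (m+j) * 4^j" using d1 by (intro mult_right_mono) auto
    also have "\<dots> \<le> w m" using IH(2) by (simp add: field_simps)
    finally have w1: "w (Suc (m+j)) \<le> w m / 4^(Suc j)" by (simp add: field_simps)
    have jb: "real j * 2^(Suc j) \<le> 4^(Suc j)"
    proof -
      have "real j \<le> 2^(Suc j)" using less_exp[of "Suc j"]
        by (metis Suc_leD Suc_leI of_nat_le_iff of_nat_numeral of_nat_power)
      then have "real j * 2^(Suc j) \<le> 2^(Suc j) * 2^(Suc j)" by (intro mult_right_mono) auto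
      also have "\<dots> = 4^(Suc j)" by (simp add: power_mult_distrib[symmetric])
      finally show ?thesis .
    qed
    have "real j * w (Suc (m+j)) \<le> real j * (w m / 4^(Suc j))" using w1 by (intro mult_left_mono) auto
    also have "\<dots> \<le> w m / 2^(Suc j)"
    proof -
      have "real j * (w m / 4^(Suc j)) = w m * (real j * 2^(Suc j)) / (4^(Suc j) * 2^(Suc j))"
        by (simp add: field_simps)
      also have "\<dots> \<le> w m * 4^(Suc j) / (4^(Suc j) * 2^(Suc j))"
        using jb pos[of m] by (intro divide_right_mono mult_left_mono) auto
      also have "\<dots> = w m / 2^(Suc j)" by simp
      finally show ?thesis .
    qed
    finally have st: "real j * w (Suc (m+j)) \<le> w m / 2^(Suc j)" .
    have "(\<Sum>i=1..m + Suc j. (real i - real m - 1) * w i) = (\<Sum>i=1..m+j. (real i - real m - 1) * w i) + real j * w (Suc (m+j))"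
      using m by simp
    also have "\<dots> \<le> - w m / 2^j + w m / 2^(Suc j)" using IH(1) st by linarith
    also have "\<dots> = - w m / 2^(Suc j)" by (simp add: field_simps)
    finally show ?case using w1 by simp
  qed
  have "(\<Sum>i=1..t. (real i - real m - 1) * w i) \<le> - w m / 2^(t-m)"
    using claim[of "t - m"] m by simp
  also have "\<dots> < 0" using pos[of m] by simp
  finally show ?thesis .
qed

lemma wpos: "0 < l \<Longrightarrow> 0 < l^i / d i" using d_pos[of i] by simp

lemma mu_lo:
  assumes t: "2 \<le> t" and rho: "2 \<le> \<rho>" "real t - \<rho> \<le> c2" and N: "c2 \<le> real N"
  shows "Ms t (2^(t-1) * real t / 4^(Suc N)) < \<rho> * Zs t (2^(t-1) * real t / 4^(Suc N))"
proof -
  define l :: real where "l = 2^(t-1) * real t / 4^(Suc N)"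
  have l: "0 < l" using t by (simp add: l_def)
  define m where "m = max 1 (t - 1 - N)"
  have m1: "1 \<le> m" "m \<le> t" using t by (auto simp: m_def)
  have mr: "real m + 1 \<le> \<rho>"
  proof (cases "t - 1 - N \<le> 1")
    case True then show ?thesis using rho by (simp add: m_def)
  next
    case False
    then have "m = t - 1 - N" "N + 1 \<le> t" by (auto simp: m_def)
    then have "real m = real t - 1 - real N" by simp
    then show ?thesis using rho N by linarith
  qed
  have dec: "l^(Suc i) / d (Suc i) \<le> (l^i / d i) / 4" if "m \<le> i" "i < t" for i
    using ratio_down[OF l _ that(2), of N] that by (auto simp: l_def m_def)
  have ns: "(\<Sum>i=1..t. (real i - real m - 1) * (l^i / d i)) < 0"
    using neg_sum[OF m1, of "\<lambda>i. l^i / d i"] wpos[OF l] dec by blast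
  have "(\<Sum>i=1..t. (real i - real m - 1) * (l^i / d i)) = Ms t l - (real m + 1) * Zs t l"
    unfolding Ms_def Zs_def by (simp add: sum_subtractf[symmetric] sum_distrib_left algebra_simps)
  then have "Ms t l < (real m + 1) * Zs t l" using ns by simp
  also have "\<dots> \<le> \<rho> * Zs t l" using mr Zs_pos[OF l, of t] t by (intro mult_right_mono) auto
  finally show ?thesis by (simp add: l_def)
qed

lemma mu_hi:
  assumes t: "1 \<le> t" and c1: "0 < c1" and e: "\<epsilon> = min 1 (c1/4)"
  shows "(real t - c1) * Zs t (2^(t-1) * real t / \<epsilon>) < Ms t (2^(t-1) * real t / \<epsilon>)"
proof -
  define l :: real where "l = 2^(t-1) * real t / \<epsilon>"
  have ep: "0 < \<epsilon>" "\<epsilon> \<le> 1" "\<epsilon> \<le> c1/4" using c1 e by auto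
  have l: "0 < l" using t ep by (simp add: l_def)
  have rat: "l^i / d i \<le> l^(Suc i) / d (Suc i) * \<epsilon> / real (t - i)" if "1 \<le> i" "i < t" for i
    using ratio_up[OF ep(1) l _ that(2)] by (simp add: l_def)
  have ts: "(\<Sum>i=1..t. real (t - i) * (l^i / d i)) \<le> (l^t / d t) * (\<epsilon> * exp \<epsilon>)"
    using tail_sums(2)[of \<epsilon> "\<lambda>i. l^i / d i" t] ep wpos[OF l] rat by auto
  have "exp \<epsilon> \<le> 3" using exp_le ep by (meson exp_le_cancel_iff order_trans)
  then have "\<epsilon> * exp \<epsilon> \<le> \<epsilon> * 3" using ep by (intro mult_left_mono) auto
  also have "\<dots> < c1" using ep c1 by linarith
  finally have ec: "\<epsilon> * exp \<epsilon> < c1" .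
  have wt: "l^t / d t \<le> Zs t l" unfolding Zs_def
    using t wpos[OF l] by (intro member_le_sum) (auto intro: less_imp_le)
  have "(\<Sum>i=1..t. real (t - i) * (l^i / d i)) = real t * Zs t l - Ms t l"
    unfolding Ms_def Zs_def sum_distrib_left
    by (simp add: sum_subtractf[symmetric] of_nat_diff algebra_simps diff_divide_distrib)
  then have "real t * Zs t l - Ms t l \<le> (l^t / d t) * (\<epsilon> * exp \<epsilon>)" using ts by simp
  also have "\<dots> < (l^t / d t) * c1" using ec wpos[OF l] by (intro mult_strict_left_mono) auto
  also have "\<dots> \<le> Zs t l * c1" using wt c1 by (intro mult_right_mono) auto
  finally show ?thesis by (simp add: l_def algebra_simps)
qed

lemma sol_char: "xy_eqs t \<rho> x y \<Longrightarrow> Ms t (exp y) = \<rho> * Zs t (exp y) \<and> exp x = 1 / Zs t (exp y)"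
  unfolding xy_iff
  by (metis mult.commute mult.left_commute mult_1 nonzero_eq_divide_eq zero_neq_one mult_zero_left)

lemma sol:
  assumes t: "2 \<le> t" and l: "0 < l1" "l1 \<le> l2"
    and lo: "Ms t l1 < \<rho> * Zs t l1" and hi: "\<rho> * Zs t l2 < Ms t l2"
  shows "\<exists>!p. xy_eqs t \<rho> (fst p) (snd p)"
    and "xy_eqs t \<rho> x y \<Longrightarrow> l1 \<le> exp y \<and> exp y \<le> l2"
proof -
  have Zp: "0 < l \<Longrightarrow> 0 < Zs t l" for l using Zs_pos[of l t] t by auto
  show bnd: "l1 \<le> exp y \<and> exp y \<le> l2" if xy: "xy_eqs t \<rho> x y" for x y
  proof -
    have c: "Ms t (exp y) = \<rho> * Zs t (exp y)" using sol_char[OF xy] by blast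
    have "\<not> exp y < l1"
    proof
      assume "exp y < l1"
      from mono_mu[OF t _ this] have "Ms t (exp y) * Zs t l1 < Ms t l1 * Zs t (exp y)" by simp
      moreover have "Ms t l1 * Zs t (exp y) < \<rho> * Zs t l1 * Zs t (exp y)"
        using lo Zp[of "exp y"] by (intro mult_strict_right_mono) auto
      ultimately show False unfolding c by (simp add: mult_ac)
    qed
    moreover have "\<not> l2 < exp y"
    proof
      assume "l2 < exp y"
      from mono_mu[OF t _ this] l have "Ms t l2 * Zs t (exp y) < Ms t (exp y) * Zs t l2" by simp
      moreover have "\<rho> * Zs t l2 * Zs t (exp y) < Ms t l2 * Zs t (exp y)"
        using hi Zp[of "exp y"] by (intro mult_strict_right_mono) auto
      ultimately show False unfolding c by (simp add: mult_ac)
    qed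
    ultimately show ?thesis by simp
  qed
  have uniq: "p = q" if p: "xy_eqs t \<rho> (fst p) (snd p)" and q: "xy_eqs t \<rho> (fst q) (snd q)" for p q
  proof -
    have cp: "Ms t (exp (snd p)) = \<rho> * Zs t (exp (snd p))" "exp (fst p) = 1 / Zs t (exp (snd p))"
      using sol_char[OF p] by auto
    have cq: "Ms t (exp (snd q)) = \<rho> * Zs t (exp (snd q))" "exp (fst q) = 1 / Zs t (exp (snd q))"
      using sol_char[OF q] by auto
    have "\<not> exp (snd p) < exp (snd q)"
    proof
      assume "exp (snd p) < exp (snd q)"
      from mono_mu[OF t _ this] show False unfolding cp cq by (simp add: mult_ac)
    qed
    moreover have "\<not> exp (snd q) < exp (snd p)"
    proof
      assume "exp (snd q) < exp (snd p)"
      from mono_mu[OF t _ this] show False unfolding cp cq by (simp add: mult_ac)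
    qed
    ultimately have "snd p = snd q" by simp
    moreover then have "exp (fst p) = exp (fst q)" using cp(2) cq(2) by simp
    then have "fst p = fst q" by simp
    ultimately show ?thesis by (simp add: prod_eq_iff)
  qed
  have "\<exists>l0. l1 \<le> l0 \<and> l0 \<le> l2 \<and> Ms t l0 / Zs t l0 = \<rho>"
  proof (rule IVT')
    show "Ms t l1 / Zs t l1 \<le> \<rho>" using lo Zp[OF l(1)] by (simp add: divide_le_eq)
    show "\<rho> \<le> Ms t l2 / Zs t l2" using hi Zp[of l2] l by (simp add: le_divide_eq)
    show "l1 \<le> l2" by fact
    have "\<forall>l\<in>{l1..l2}. Zs t l \<noteq> 0"
    proof
      fix l assume "l \<in> {l1..l2}"
      then have "0 < l" using l by simp
      then show "Zs t l \<noteq> 0" using Zp[of l] by simp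
    qed
    then show "continuous_on {l1..l2} (\<lambda>l. Ms t l / Zs t l)"
      unfolding Ms_def Zs_def using d_pos by (intro continuous_intros) (auto simp: less_le)
  qed
  then obtain l0 where l0: "l1 \<le> l0" "Ms t l0 / Zs t l0 = \<rho>" by blast
  have l0p: "0 < l0" using l l0 by simp
  have "xy_eqs t \<rho> (- ln (Zs t l0)) (ln l0)"
    unfolding xy_iff using l0p Zp[OF l0p] l0(2) by (simp add: exp_minus field_simps)
  then show "\<exists>!p. xy_eqs t \<rho> (fst p) (snd p)"
    using uniq by (intro ex1I[where a="(- ln (Zs t l0), ln l0)"]) auto
qed

lemma walk:
  fixes F :: "nat \<Rightarrow> real"
  assumes B: "0 \<le> B" and step: "\<And>n. \<bar>real n - real t\<bar> \<le> C \<Longrightarrow> \<bar>F (Suc n) - F n\<bar> \<le> B"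
    and a: "\<bar>real a - real t\<bar> \<le> C"
  shows "\<bar>F a - F t\<bar> \<le> C * B"
proof -
  have up: "real k \<le> C \<Longrightarrow> \<bar>F (t + k) - F t\<bar> \<le> real k * B" for k
  proof (induction k)
    case 0 then show ?case by simp
  next
    case (Suc k)
    have "\<bar>F (Suc (t + k)) - F (t + k)\<bar> \<le> B" using Suc.prems by (intro step) auto
    then show ?case using Suc by (simp add: algebra_simps)
  qed
  have down: "k \<le> t \<Longrightarrow> real k \<le> C \<Longrightarrow> \<bar>F (t - k) - F t\<bar> \<le> real k * B" for k
  proof (induction k)
    case 0 then show ?case by simp
  next
    case (Suc k)
    have e: "Suc (t - Suc k) = t - k" using Suc.prems by simp
    have "\<bar>F (Suc (t - Suc k)) - F (t - Suc k)\<bar> \<le> B" using Suc.prems by (intro step) (auto simp: of_nat_diff)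
    then have "\<bar>F (t - k) - F (t - Suc k)\<bar> \<le> B" unfolding e .
    then show ?case using Suc by (simp add: algebra_simps)
  qed
  show ?thesis
  proof (cases "t \<le> a")
    case True
    then have "a = t + (a - t)" "real (a - t) \<le> C" using a by (auto simp: of_nat_diff)
    then show ?thesis using up[of "a - t"] B by (metis mult_right_mono order_trans)
  next
    case False
    then have "a = t - (t - a)" "real (t - a) \<le> C" "t - a \<le> t" using a by (auto simp: of_nat_diff)
    then show ?thesis using down[of "t - a"] B by (metis mult_right_mono order_trans)
  qed
qed

lemma ln_diff_le: fixes u v :: real assumes "1 \<le> u" "1 \<le> v" shows "\<bar>ln u - ln v\<bar> \<le> \<bar>u - v\<bar>"
proof -
  have h: "ln u - ln v \<le> \<bar>u - v\<bar>" if "1 \<le> u" "1 \<le> v" for u v :: real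
  proof -
    have "ln u - ln v = ln (u / v)" using that by (simp add: ln_div)
    also have "\<dots> \<le> u / v - 1" using that by (intro ln_le_minus_one) auto
    also have "\<dots> = (u - v) / v" using that by (simp add: field_simps)
    also have "\<dots> \<le> \<bar>u - v\<bar> / v" using that by (intro divide_right_mono) auto
    also have "\<dots> \<le> \<bar>u - v\<bar>" using that mult_left_mono[of 1 v "\<bar>u - v\<bar>"] by (simp add: divide_le_eq)
    finally show ?thesis .
  qed
  show ?thesis using h[OF assms] h[OF assms(2,1)] by (simp add: abs_minus_commute)
qed

lemma abs3: fixes z p q r al be :: real
  assumes "z = p + q + r" "\<bar>p\<bar> \<le> al" "\<bar>q\<bar> \<le> be" "\<bar>r\<bar> \<le> be"
  shows "\<bar>z\<bar> \<le> al + 2 * be"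
  using assms by (simp add: abs_le_iff)

theorem lemma37:
  fixes c1 c2 C :: real
  assumes "0 < c1" and "c1 \<le> c2" and "0 \<le> C"
  shows "\<exists>K. \<forall>(t::nat) (\<rho>::real) (a::nat).
           0 < t \<longrightarrow> 2 \<le> \<rho> \<longrightarrow> c1 \<le> real t - \<rho> \<longrightarrow> real t - \<rho> \<le> c2 \<longrightarrow>
           0 < a \<longrightarrow> \<bar>real a - real t\<bar> \<le> C \<longrightarrow>
           \<bar>xt t \<rho> + real a * yt t \<rho> - ln (d a)\<bar> \<le> K"
proof -
  define N where "N = nat \<lceil>c2\<rceil>"
  define G :: real where "G = 4^(Suc N)"
  define \<epsilon> where "\<epsilon> = min 1 (c1/4)"
  define B where "B = ln G - ln \<epsilon> + 2 * (C + 1)"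
  have N: "c2 \<le> real N" unfolding N_def by linarith
  have G1: "1 \<le> G" unfolding G_def using one_le_power[of "4::real" "Suc N"] by simp
  have ep: "0 < \<epsilon>" "\<epsilon> \<le> 1" using assms by (auto simp: \<epsilon>_def)
  have lnG: "0 \<le> ln G" using G1 by simp
  have lne: "ln \<epsilon> \<le> 0" using ep by simp
  have B0: "0 \<le> B"
  proof -
    have "0 \<le> ln G - ln \<epsilon>" using lnG lne by linarith
    moreover have "0 \<le> 2 * (C + 1)" using assms(3) by simp
    ultimately show ?thesis unfolding B_def by (rule add_nonneg_nonneg)
  qed
  show ?thesis
  proof (intro exI[of _ "G + C * B"] allI impI)
    fix t :: nat and \<rho> :: real and a :: nat
    assume H: "0 < t" "2 \<le> \<rho>" "c1 \<le> real t - \<rho>" "real t - \<rho> \<le> c2" "0 < a" "\<bar>real a - real t\<bar> \<le> C"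
    have t2: "2 \<le> t" using H assms by linarith
    define P :: real where "P = 2^(t-1) * real t"
    have P: "0 < P" using t2 by (simp add: P_def)
    define l1 where "l1 = P / G"
    define l2 where "l2 = P / \<epsilon>"
    have l1: "0 < l1" using P G1 by (simp add: l1_def)
    have l12: "l1 \<le> l2" unfolding l1_def l2_def using P G1 ep
      by (intro divide_left_mono) (auto intro: order_trans)
    have lo: "Ms t l1 < \<rho> * Zs t l1"
      using mu_lo[OF t2 H(2) H(4) N] by (simp add: l1_def P_def G_def)
    have hi0: "(real t - c1) * Zs t l2 < Ms t l2"
      using mu_hi[OF _ assms(1) \<epsilon>_def] t2 by (simp add: l2_def P_def)
    have "\<rho> * Zs t l2 \<le> (real t - c1) * Zs t l2"
      using H(3) Zs_pos[of l2 t] l1 l12 t2 by (intro mult_right_mono) auto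
    with hi0 have hi: "\<rho> * Zs t l2 < Ms t l2" by linarith
    note S = sol[OF t2 l1 l12 lo hi]
    have xy: "xy_eqs t \<rho> (xt t \<rho>) (yt t \<rho>)"
      unfolding xt_def yt_def using theI'[OF S(1)] .
    define x where "x = xt t \<rho>"
    define y where "y = yt t \<rho>"
    define l where "l = exp y"
    have lb: "l1 \<le> l" "l \<le> l2" using S(2)[OF xy] by (auto simp: l_def y_def)
    have l: "0 < l" by (simp add: l_def)
    have Zp: "0 < Zs t l" using Zs_pos[OF l] t2 by simp
    have ex: "exp x = 1 / Zs t l" using sol_char[OF xy] by (simp add: x_def y_def l_def)
    then have xe: "x = - ln (Zs t l)" by (metis ln_exp ln_inverse Zp inverse_eq_divide)
    define F where "F n = x + real n * y - ln (d n)" for n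
    define wt where "wt = l^t / d t"
    have wtp: "0 < wt" using wpos[OF l] by (simp add: wt_def)
    have Ft: "F t = ln wt - ln (Zs t l)"
      unfolding F_def wt_def xe using l d_pos[of t]
      by (simp add: ln_div ln_realpow l_def)
    have wtZ: "wt \<le> Zs t l" unfolding Zs_def wt_def
      using t2 wpos[OF l] by (intro member_le_sum) (auto intro: less_imp_le)
    have rat: "l^i / d i \<le> l^(Suc i) / d (Suc i) * G / real (t - i)" if "1 \<le> i" "i < t" for i
      using ratio_up[of G l t i] G1 l lb(1) that by (simp add: l1_def P_def)
    have Zw: "Zs t l \<le> wt * exp G"
      unfolding Zs_def wt_def using tail_sums(1)[of G "\<lambda>i. l^i / d i" t] G1 wpos[OF l] rat by auto
    have Ft1: "F t \<le> 0" using Ft wtZ wtp by simp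
    have "ln (Zs t l) \<le> ln (wt * exp G)" using Zw Zp by simp
    also have "\<dots> = ln wt + G" using wtp by (simp add: ln_mult)
    finally have Ft2: "- G \<le> F t" using Ft by simp
    have FtG: "\<bar>F t\<bar> \<le> G" using Ft1 Ft2 unfolding abs_le_iff by linarith
    have ly: "ln P - ln G \<le> y" "y \<le> ln P - ln \<epsilon>"
    proof -
      have "ln l1 \<le> ln l" "ln l \<le> ln l2" using lb l1 l12 by auto
      moreover have "ln l1 = ln P - ln G" "ln l2 = ln P - ln \<epsilon>" using P G1 ep
        by (auto simp: l1_def l2_def ln_div)
      ultimately show "ln P - ln G \<le> y" "y \<le> ln P - ln \<epsilon>" by (auto simp: l_def)
    qed
    have lnP: "ln P = (real t - 1) * ln 2 + ln (real t)"
      using t2 by (simp add: P_def ln_mult ln_realpow of_nat_diff)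
    have ln2: "0 < ln (2::real)" "ln (2::real) \<le> 1" using ln_le_minus_one[of 2] by auto
    have step: "\<bar>F (Suc n) - F n\<bar> \<le> B" if n: "\<bar>real n - real t\<bar> \<le> C" for n
    proof -
      have "ln (d (Suc n)) = ln (d n) + real n * ln 2 + ln (real (Suc n))"
        using d_pos[of n] by (simp add: d_Suc ln_mult ln_realpow del: of_nat_Suc)
      then have "F (Suc n) - F n = (y - ln P) + (real t - 1 - real n) * ln 2 + (ln (real t) - ln (real (Suc n)))"
        unfolding F_def lnP by (simp add: algebra_simps)
      moreover have "\<bar>y - ln P\<bar> \<le> ln G - ln \<epsilon>" using ly lnG lne unfolding abs_le_iff by linarith
      moreover have "\<bar>(real t - 1 - real n) * ln 2\<bar> \<le> C + 1"
      proof -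
        have "\<bar>(real t - 1 - real n) * ln 2\<bar> = \<bar>real t - 1 - real n\<bar> * ln 2" using ln2 by (simp add: abs_mult)
        also have "\<dots> \<le> \<bar>real t - 1 - real n\<bar> * 1" using ln2 by (intro mult_left_mono) auto
        also have "\<dots> \<le> C + 1" using n unfolding mult_1_right abs_le_iff by linarith
        finally show ?thesis .
      qed
      moreover have "\<bar>ln (real t) - ln (real (Suc n))\<bar> \<le> C + 1"
      proof -
        have "\<bar>ln (real t) - ln (real (Suc n))\<bar> \<le> \<bar>real t - real (Suc n)\<bar>"
          using t2 by (intro ln_diff_le) auto
        also have "\<dots> \<le> C + 1" using n by simp
        finally show ?thesis .
      qed
      ultimately show ?thesis unfolding B_def by (rule abs3)
    qed
    have "\<bar>F a - F t\<bar> \<le> C * B" using walk[of B t C F a, OF B0 step H(6)] by blast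
    then have "\<bar>F a\<bar> \<le> G + C * B" using FtG unfolding abs_le_iff by linarith
    then show "\<bar>xt t \<rho> + real a * yt t \<rho> - ln (d a)\<bar> \<le> G + C * B"
      by (simp add: F_def x_def y_def)
  qed
qed

end
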